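(* Let $\omega\in(0,1/2)$, $\tau>0$ and $k$ a positive integer. Suppose the test statistic $h$ satisfies $h\mid\lambda\sim\chi^2_k(\lambda)$, with $\lambda\sim(1-\omega)\delta_0+\omega\,\mathrm{G}(k/2+1,\,1/(2\tau^2))$ under $\mathrm{H}_0$ and $\lambda\sim\omega\delta_0+(1-\omega)\mathrm{G}(k/2+1,\,1/(2\tau^2))$ under $\mathrm{H}_1$. Then the Bayes factor in favor of $\mathrm{H}_1$ is $$\mathrm{BF}^t_{10}(h\mid\tau^2,\omega)=\frac{\omega+(1-\omega)R}{(1-\omega)+\omega R},$$ where $R=m_1(h\mid\tau^2)/m_0(h)$, with $m_0(h)$ the central $\chi^2_k$ density at $h$ and $m_1(h\mid\tau^2)$ the marginal density of $h$ when $\lambda\sim\mathrm{G}(k/2+1,1/(2\tau^2))$, and $$R=(1+\tau^2)^{-k/2-1}\,{}_1F_1\!\left(\tfrac k2+1,\ \tfrac k2;\ \frac{\tau^2h}{2(1+\tau^2)}\right).$$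
   Context: $\delta_0$ is the point mass at $0$. $\chi^2_k(\lambda)$ is the noncentral chi-squared distribution with $k$ degrees of freedom and noncentrality $\lambda$, with density $\sum_{i\ge0}e^{-\lambda/2}\frac{(\lambda/2)^i}{i!}f_{k+2i}(h)$, $f_\nu$ the central $\chi^2_\nu$ density. $\mathrm{G}(\alpha,\theta)$ is the gamma distribution with shape $\alpha$ and rate $\theta$. ${}_1F_1(a,b;x)=\sum_{i\ge0}\frac{(a)_i}{(b)_i\,i!}x^i$. The Bayes factor is the ratio of the marginal density of $h$ under $\mathrm{H}_1$ to that under $\mathrm{H}_0$. *)

theory Defs
  imports "HOL-Analysis.Analysis"
begin

definition chi2_density :: "real \<Rightarrow> real \<Rightarrow> real" where
  "chi2_density nu h =
     (if h > 0 then h powr (nu / 2 - 1) * exp (- h / 2) / (2 powr (nu / 2) * Gamma (nu / 2)) else 0)"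

definition ncchi2_density :: "nat \<Rightarrow> real \<Rightarrow> real \<Rightarrow> real" where
  "ncchi2_density k lam h =
     (\<Sum>i. exp (- lam / 2) * (lam / 2) ^ i / fact i * chi2_density (real k + 2 * real i) h)"

definition gamma_density :: "real \<Rightarrow> real \<Rightarrow> real \<Rightarrow> real" where
  "gamma_density a theta x =
     (if x > 0 then theta powr a * x powr (a - 1) * exp (- theta * x) / Gamma a else 0)"

definition hyp1f1 :: "real \<Rightarrow> real \<Rightarrow> real \<Rightarrow> real" where
  "hyp1f1 a b x = (\<Sum>i. pochhammer a i / (pochhammer b i * fact i) * x ^ i)"

definition m0 :: "nat \<Rightarrow> real \<Rightarrow> real" where
  "m0 k h = chi2_density (real k) h"

definition m1 :: "nat \<Rightarrow> real \<Rightarrow> real \<Rightarrow> real" where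
  "m1 k tau2 h =
     (LBINT lam:{0<..}. ncchi2_density k lam h * gamma_density (real k / 2 + 1) (1 / (2 * tau2)) lam)"

text \<open>Marginal densities under H0 and H1. The point mass at 0 contributes the
  noncentral density at lambda = 0.\<close>
definition marg_H0 :: "nat \<Rightarrow> real \<Rightarrow> real \<Rightarrow> real \<Rightarrow> real" where
  "marg_H0 k tau2 \<omega> h = (1 - \<omega>) * ncchi2_density k 0 h + \<omega> * m1 k tau2 h"

definition marg_H1 :: "nat \<Rightarrow> real \<Rightarrow> real \<Rightarrow> real \<Rightarrow> real" where
  "marg_H1 k tau2 \<omega> h = \<omega> * ncchi2_density k 0 h + (1 - \<omega>) * m1 k tau2 h"

definition bayes_factor_10 :: "nat \<Rightarrow> real \<Rightarrow> real \<Rightarrow> real \<Rightarrow> real" where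
  "bayes_factor_10 k tau2 \<omega> h = marg_H1 k tau2 \<omega> h / marg_H0 k tau2 \<omega> h"

end

theory Submission
  imports Defs
begin



lemma gamma_nn:
  fixes s c :: real
  assumes s: "s > 0" and c: "c > 0"
  shows "(\<integral>\<^sup>+x. ennreal (indicator {0<..} x * x powr (s-1) * exp(-c*x)) \<partial>lborel)
         = ennreal (Gamma s / c powr s)"
proof -
  let ?f = "\<lambda>x::real. ennreal (indicator {0<..} x * x powr (s-1) * exp(-c*x))"
  have "(\<integral>\<^sup>+x. ?f x \<partial>lborel) = \<bar>1/c\<bar> * (\<integral>\<^sup>+x. ?f (0 + (1/c) * x) \<partial>lborel)"
    by (rule nn_integral_real_affine) (use c in auto)
  also have "(\<lambda>x. ?f (0 + (1/c) * x)) = (\<lambda>x. ennreal (c powr (1-s)) * ennreal (indicator {0..} x * x powr (s - 1) / exp x))"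
  proof
    fix x :: real
    show "?f (0 + (1/c) * x) = ennreal (c powr (1-s)) * ennreal (indicator {0..} x * x powr (s - 1) / exp x)"
    proof (cases "x > 0")
      case True
      have p1: "(x/c) powr (s-1) = x powr (s-1) / c powr (s-1)"
        using True c by (simp add: powr_divide)
      have p2: "c powr (1-s) = 1 / c powr (s-1)"
        using c by (subst powr_minus_divide[symmetric]) simp
      have "(x/c) powr (s-1) = x powr (s-1) * c powr (1-s)"
        unfolding p1 p2 by simp
      then show ?thesis using True c
        by (simp add: ennreal_mult'[symmetric] exp_minus field_simps)
    next
      case False
      then show ?thesis using c by (cases "x = 0") (auto simp: indicator_def zero_less_divide_iff)
    qed
  qed
  also have "(\<integral>\<^sup>+x. ennreal (c powr (1-s)) * ennreal (indicator {0..} x * x powr (s - 1) / exp x) \<partial>lborel)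
     = ennreal (c powr (1-s)) * ennreal (Gamma s)"
    by (subst nn_integral_cmult) (auto simp: Gamma_conv_nn_integral_real[OF s])
  finally show ?thesis using c s
    apply (simp add: ennreal_mult'[symmetric] ennreal_mult[symmetric])
    apply (simp add: powr_diff field_simps)
    done
qed


lemma Gamma_poch:
  fixes x :: real assumes "x > 0"
  shows "Gamma (x + real n) = Gamma x * pochhammer x n"
proof (induction n)
  case 0 then show ?case by simp
next
  case (Suc n)
  have "Gamma (x + real (Suc n)) = Gamma ((x + real n) + 1)" by (simp add: add_ac)
  also have "\<dots> = (x + real n) * Gamma (x + real n)"
    by (rule Gamma_plus1) (use assms in \<open>auto elim!: nonpos_Ints_cases\<close>)
  also have "\<dots> = Gamma x * pochhammer x (Suc n)" using Suc by (simp add: pochhammer_rec' mult_ac)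
  finally show ?case .
qed

lemma chi2_ratio:
  assumes h: "h > 0" and k: "k > 0"
  shows "chi2_density (real k + 2 * real i) h = chi2_density (real k) h * (h/2)^i / pochhammer (real k / 2) i"
proof -
  have G: "Gamma ((real k + 2 * real i) / 2) = Gamma (real k / 2) * pochhammer (real k / 2) i"
    using Gamma_poch[of "real k / 2" i] k by (simp add: add_divide_distrib)
  have P1: "h powr ((real k + 2 * real i) / 2 - 1) = h powr (real k / 2 - 1) * h ^ i"
  proof -
    have e: "(real k + 2 * real i) / 2 - 1 = real i + (real k / 2 - 1)" by (simp add: field_simps)
    show ?thesis using h by (subst e) (simp add: powr_add powr_realpow mult.commute)
  qed
  have P2: "(2::real) powr ((real k + 2 * real i) / 2) = 2 powr (real k / 2) * 2 ^ i"
    by (simp add: add_divide_distrib powr_add powr_realpow[symmetric])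
  have "pochhammer (real k / 2) i > 0" using k by (intro pochhammer_pos) auto
  moreover have "Gamma (real k / 2) > 0" using k by (intro Gamma_real_pos) auto
  ultimately show ?thesis using h
    unfolding chi2_density_def G P1 P2 by (simp add: field_simps power_divide)
qed

lemma term_int:
  fixes a th C :: real
  assumes a: "a > 0" and th: "th > 0" and C: "C \<ge> 0"
  shows "(\<integral>\<^sup>+x. ennreal (indicator {0<..} x * (exp (- x / 2) * (x / 2) ^ i / fact i * C * gamma_density a th x)) \<partial>lborel)
     = ennreal (C * th powr a * pochhammer a i / (2^i * fact i * (th + 1/2) powr (a + real i)))"
proof -
  define D where "D = C * th powr a / (2^i * fact i * Gamma a)"
  have Gp: "Gamma a > 0" using a by (intro Gamma_real_pos) auto
  have D: "D \<ge> 0" unfolding D_def using C Gp by auto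
  have eq: "indicator {0<..} x * (exp (- x / 2) * (x / 2) ^ i / fact i * C * gamma_density a th x)
      = D * (indicator {0<..} x * x powr ((a + real i) - 1) * exp (-(th + 1/2) * x))" for x :: real
  proof (cases "x > 0")
    case True
    have "x powr ((a + real i) - 1) = x powr (a - 1) * x ^ i"
      using True by (simp add: powr_add[symmetric] powr_realpow[symmetric] algebra_simps)
    moreover have "exp (-(th + 1/2) * x) = exp (- x / 2) * exp (- th * x)"
      by (simp add: exp_add[symmetric] algebra_simps)
    ultimately show ?thesis using True unfolding D_def gamma_density_def
      by (simp add: power_divide field_simps)
  qed (simp add: gamma_density_def)
  have "(\<integral>\<^sup>+x. ennreal (indicator {0<..} x * (exp (- x / 2) * (x / 2) ^ i / fact i * C * gamma_density a th x)) \<partial>lborel)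
      = (\<integral>\<^sup>+x. ennreal D * ennreal (indicator {0<..} x * x powr ((a + real i) - 1) * exp (-(th + 1/2) * x)) \<partial>lborel)"
    unfolding eq using D by (simp add: ennreal_mult)
  also have "\<dots> = ennreal D * ennreal (Gamma (a + real i) / (th + 1/2) powr (a + real i))"
    apply (subst nn_integral_cmult)
     apply measurable
    apply (subst gamma_nn)
    using a th by auto
  also have "\<dots> = ennreal (C * th powr a * pochhammer a i / (2^i * fact i * (th + 1/2) powr (a + real i)))"
  proof -
    have pa: "pochhammer a i > 0" using a by (intro pochhammer_pos) auto
    have "D * (Gamma (a + real i) / (th + 1/2) powr (a + real i)) = C * th powr a * pochhammer a i / (2^i * fact i * (th + 1/2) powr (a + real i))"
      unfolding D_def Gamma_poch[OF a] using Gp by (simp add: field_simps)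
    moreover have "Gamma (a + real i) / (th + 1/2) powr (a + real i) \<ge> 0"
      unfolding Gamma_poch[OF a] using Gp pa by auto
    ultimately show ?thesis using D by (simp add: ennreal_mult[symmetric])
  qed
  finally show ?thesis .
qed

lemma hyp_summable:
  fixes b z :: real
  assumes b: "b \<ge> 1/2" and z: "z \<ge> 0"
  shows "summable (\<lambda>i. pochhammer (b + 1) i / (pochhammer b i * fact i) * z ^ i)"
proof (rule summable_ratio_test[where c = "1/2" and N = "nat \<lceil>6 * z\<rceil>"])
  fix n assume n: "n \<ge> nat \<lceil>6 * z\<rceil>"
  have pb: "pochhammer b n > 0" using b by (intro pochhammer_pos) auto
  have pa: "pochhammer (b+1) n > 0" using b by (intro pochhammer_pos) auto
  have nz: "6 * z \<le> real n" using n by linarith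
  have r: "(b + 1 + real n) / ((b + real n) * (real n + 1)) * z \<le> 1/2"
  proof -
    have "(b + 1 + real n) / ((b + real n) * (real n + 1)) \<le> 3 / (real n + 1)"
      using b by (simp add: divide_simps)
    then have "(b + 1 + real n) / ((b + real n) * (real n + 1)) * z \<le> 3 / (real n + 1) * z"
      using z by (rule mult_right_mono)
    also have "\<dots> \<le> 1/2" using nz z by (simp add: divide_simps)
    finally show ?thesis .
  qed
  define t where "t = pochhammer (b + 1) n / (pochhammer b n * fact n) * z ^ n"
  have t0: "t \<ge> 0" unfolding t_def using pa pb z by auto
  define L where "L = pochhammer (b + 1) (Suc n) / (pochhammer b (Suc n) * fact (Suc n)) * z ^ Suc n"
  have "L = t * ((b + 1 + real n) / ((b + real n) * (real n + 1)) * z)"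
    unfolding t_def L_def using pb b by (simp add: pochhammer_Suc field_simps)
  also have "\<dots> \<le> t * (1/2)" using r t0 by (rule mult_left_mono)
  finally have X: "L \<le> t * (1/2)" .
  have L0: "L \<ge> 0" unfolding L_def using pa pb z b
    by (intro mult_nonneg_nonneg divide_nonneg_pos mult_pos_pos) (auto intro!: pochhammer_pos less_imp_le)
  show "norm (pochhammer (b + 1) (Suc n) / (pochhammer b (Suc n) * fact (Suc n)) * z ^ Suc n)
        \<le> 1 / 2 * norm (pochhammer (b + 1) n / (pochhammer b n * fact n) * z ^ n)"
    using X L0 t0 unfolding L_def[symmetric] t_def[symmetric] by simp
qed simp



theorem proposition6:
  fixes \<omega> \<tau> h :: real and k :: nat
  assumes "0 < \<omega>" "\<omega> < 1/2" "\<tau> > 0" "k > 0" "h > 0"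
  defines "R \<equiv> m1 k (\<tau>^2) h / m0 k h"
  shows "bayes_factor_10 k (\<tau>^2) \<omega> h = (\<omega> + (1 - \<omega>) * R) / ((1 - \<omega>) + \<omega> * R)
       \<and> R = (1 + \<tau>^2) powr (- real k / 2 - 1) *
             hyp1f1 (real k / 2 + 1) (real k / 2) (\<tau>^2 * h / (2 * (1 + \<tau>^2)))"
proof -
  define T where "T = \<tau>^2"
  have T: "T > 0" using assms by (simp add: T_def)
  define b where "b = real k / 2"
  define a where "a = b + 1"
  define th where "th = 1 / (2 * T)"
  define z where "z = T * h / (2 * (1 + T))"
  define M where "M = m0 k h"
  have h: "h > 0" and k: "k > 0" using assms by auto
  have b: "b \<ge> 1/2" using k unfolding b_def by simp
  have a: "a > 0" using b unfolding a_def by simp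
  have th: "th > 0" using T unfolding th_def by simp
  have z: "z \<ge> 0" using T h unfolding z_def by simp
  have M: "M > 0" unfolding M_def m0_def chi2_density_def using assms
    by (auto intro!: divide_pos_pos Gamma_real_pos)
  have nc0: "ncchi2_density k 0 h = M"
  proof -
    have "(\<lambda>i. exp (- 0 / 2) * (0 / 2) ^ i / fact i * chi2_density (real k + 2 * real i) h)
        = (\<lambda>i. if i = 0 then M else 0)" by (auto simp: M_def m0_def)
    then show ?thesis unfolding ncchi2_density_def
      by (simp add: sums_unique[OF sums_single, symmetric])
  qed
  define t where "t = (\<lambda>i x. exp (- x / 2) * (x / 2) ^ i / fact i * chi2_density (real k + 2 * real i) h)"
  define g where "g = (\<lambda>x. gamma_density a th x)"
  define c where "c = (\<lambda>i. M * (1 + T) powr (- a) * (pochhammer a i / (pochhammer b i * fact i) * z ^ i))"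
  have m1eq: "m1 k T h = (LBINT x:{0<..}. ncchi2_density k x h * g x)"
    by (simp add: m1_def g_def a_def b_def th_def)
  have chi_nn: "chi2_density (real k + 2 * real i) h \<ge> 0" for i
    using k unfolding chi2_density_def using h by (auto intro!: divide_nonneg_nonneg mult_nonneg_nonneg less_imp_le[OF Gamma_real_pos])
  have g_pos: "x > 0 \<Longrightarrow> g x > 0" for x
    unfolding g_def gamma_density_def using a th by (auto intro!: divide_pos_pos mult_pos_pos Gamma_real_pos)
  have g_nn: "g x \<ge> 0" for x
    using g_pos[of x] unfolding g_def gamma_density_def by (cases "x > 0") auto
  have t_nn: "x > 0 \<Longrightarrow> t i x \<ge> 0" for i x
    unfolding t_def using chi_nn by auto
  have c_nn: "c i \<ge> 0" for i
    unfolding c_def using M z b a by (auto intro!: mult_nonneg_nonneg divide_nonneg_nonneg pochhammer_nonneg)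
  have c_sum: "summable c"
    unfolding c_def a_def by (intro summable_mult hyp_summable b z)
  have nn_int: "(\<integral>\<^sup>+x. ennreal (indicator {0<..} x * (t i x * g x)) \<partial>lborel) = ennreal (c i)" for i
  proof -
    have "(\<integral>\<^sup>+x. ennreal (indicator {0<..} x * (t i x * g x)) \<partial>lborel)
       = ennreal (chi2_density (real k + 2 * real i) h * th powr a * pochhammer a i / (2^i * fact i * (th + 1/2) powr (a + real i)))"
      unfolding t_def g_def by (rule term_int[OF a th chi_nn])
    also have "chi2_density (real k + 2 * real i) h * th powr a * pochhammer a i / (2^i * fact i * (th + 1/2) powr (a + real i)) = c i"
    proof -
      have pb: "pochhammer b i > 0" using b by (intro pochhammer_pos) auto
      have e1: "(th + 1/2) powr (a + real i) = (th + 1/2) powr a * (th + 1/2) ^ i"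
        using th by (simp add: powr_add powr_realpow)
      have e2: "th powr a / (th + 1/2) powr a = (1 + T) powr (- a)"
      proof -
        have "th / (th + 1/2) = 1 / (1 + T)" unfolding th_def using T by (simp add: field_simps)
        then have "th powr a / (th + 1/2) powr a = (1 / (1 + T)) powr a"
          using th T by (simp add: powr_divide[symmetric])
        also have "\<dots> = (1 + T) powr (- a)" using T by (simp add: powr_divide powr_minus_divide)
        finally show ?thesis .
      qed
      have e3: "(h/2)^i / (2^i * (th + 1/2)^i) = z^i"
      proof -
        have "(h/2) / (2 * (th + 1/2)) = z" unfolding th_def z_def using T by (simp add: field_simps)
        then have "((h/2) / (2 * (th + 1/2)))^i = z^i" by simp
        then show ?thesis by (simp only: power_divide power_mult_distrib)
      qed
      have "chi2_density (real k + 2 * real i) h * th powr a * pochhammer a i / (2^i * fact i * (th + 1/2) powr (a + real i))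
          = M * (th powr a / (th + 1/2) powr a) * (pochhammer a i / (pochhammer b i * fact i) * ((h/2)^i / (2^i * (th + 1/2)^i)))"
        unfolding chi2_ratio[OF h k] e1 M_def m0_def b_def[symmetric] using pb th by (simp add: field_simps)
      also have "\<dots> = c i" unfolding e2 e3 c_def ..
      finally show ?thesis .
    qed
    finally show ?thesis .
  qed
  have meas: "(\<lambda>x. ennreal (indicator {0<..} x * (t i x * g x))) \<in> borel_measurable lborel" for i
    unfolding t_def g_def gamma_density_def chi2_density_def by measurable
  have S: "(\<integral>\<^sup>+x. (\<Sum>i. ennreal (indicator {0<..} x * (t i x * g x))) \<partial>lborel) = ennreal (suminf c)"
    using nn_integral_suminf[OF meas] nn_int c_nn c_sum
    by (simp add: suminf_ennreal_eq summable_sums)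
  have fin: "AE x in lborel. (\<Sum>i. ennreal (indicator {0<..} x * (t i x * g x))) \<noteq> \<infinity>"
    by (rule nn_integral_noteq_infinite) (use S meas in auto)
  define G where "G = (\<lambda>x. indicator {0<..} x *\<^sub>R (ncchi2_density k x h * g x))"
  have AEG: "AE x in lborel. G x \<ge> 0 \<and> ennreal (G x) = (\<Sum>i. ennreal (indicator {0<..} x * (t i x * g x)))"
    using fin
  proof eventually_elim
    case (elim x)
    show ?case
    proof (cases "x > 0")
      case True
      have s1: "summable (\<lambda>i. t i x * g x)"
        using elim True t_nn g_nn by (intro summable_suminf_not_top) auto
      have "summable (\<lambda>i. t i x * g x / g x)" using s1 by (rule summable_divide)
      then have s2: "summable (\<lambda>i. t i x)" using g_pos[OF True] by simp
      have nc: "ncchi2_density k x h = (\<Sum>i. t i x)" unfolding ncchi2_density_def t_def ..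
      have "G x = (\<Sum>i. t i x * g x)" unfolding G_def nc using True by (simp add: suminf_mult2[OF s2])
      moreover have "(\<Sum>i. ennreal (t i x * g x)) = ennreal (\<Sum>i. t i x * g x)"
        by (rule suminf_ennreal_eq[OF _ summable_sums[OF s1]]) (use True t_nn g_nn in auto)
      ultimately show ?thesis using s1 True t_nn g_nn
        by (simp add: suminf_nonneg mult_nonneg_nonneg)
    next
      case False
      then show ?thesis unfolding G_def by simp
    qed
  qed
  have Gmeas: "G \<in> borel_measurable lborel"
    unfolding G_def ncchi2_density_def g_def gamma_density_def chi2_density_def by measurable
  have "m1 k T h = integral\<^sup>L lborel G"
    unfolding m1eq G_def set_lebesgue_integral_def ..
  also have "\<dots> = enn2real (\<integral>\<^sup>+ x. ennreal (G x) \<partial>lborel)"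
    by (rule integral_eq_nn_integral[OF Gmeas]) (use AEG in auto)
  also have "(\<integral>\<^sup>+ x. ennreal (G x) \<partial>lborel) = ennreal (suminf c)"
    unfolding S[symmetric] by (rule nn_integral_cong_AE) (use AEG in auto)
  also have "enn2real (ennreal (suminf c)) = suminf c"
    using c_nn c_sum by (simp add: suminf_nonneg)
  also have "suminf c = M * (1 + T) powr (- a) * hyp1f1 a b z"
    unfolding c_def hyp1f1_def a_def by (rule suminf_mult[OF hyp_summable[OF b z]])
  finally have m1v: "m1 k T h = M * (1 + T) powr (- a) * hyp1f1 a b z" .
  have Rv: "R = m1 k T h / M" unfolding R_def T_def M_def ..
  show ?thesis
  proof
    show "bayes_factor_10 k (\<tau>^2) \<omega> h = (\<omega> + (1 - \<omega>) * R) / ((1 - \<omega>) + \<omega> * R)"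
    proof -
      let ?m = "m1 k T h"
      have e1: "\<omega> + (1 - \<omega>) * (?m / M) = (\<omega> * M + (1 - \<omega>) * ?m) / M" using M by (simp add: field_simps)
      have e2: "(1 - \<omega>) + \<omega> * (?m / M) = ((1 - \<omega>) * M + \<omega> * ?m) / M" using M by (simp add: field_simps)
      show ?thesis
        unfolding bayes_factor_10_def marg_H0_def marg_H1_def nc0 Rv T_def[symmetric] e1 e2 using M
        by simp
    qed
    show "R = (1 + \<tau>^2) powr (- real k / 2 - 1) *
             hyp1f1 (real k / 2 + 1) (real k / 2) (\<tau>^2 * h / (2 * (1 + \<tau>^2)))"
      unfolding Rv m1v using M by (simp add: T_def a_def b_def z_def)
  qed
qed

end
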